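(* Let $0<r<1$. In the RRH with redirection parameter $r$, for every $N\ge 1$, $$\mathbb{E}[\mathcal{R}_2(N)]=\frac{1}{r}\left[\frac{\Gamma(N+r)}{\Gamma(1+r)\,\Gamma(N)}-1\right],$$ and consequently $\mathbb{E}[\mathcal{R}_2(N)]\sim \dfrac{N^r}{r\,\Gamma(1+r)}$ as $N\to\infty$.
   Context: The RRH with redirection parameter $r\in[0,1)$ is the following random hypergraph process. At size $N=1$ it has vertex set $\{v_1\}$ and edge set $\{\{v_1\}\}$. Given the hypergraph of size $N$ (vertices $v_1,\dots,v_N$, $N$ edges), choose an existing edge $e$ uniformly at random and add a new vertex $v_{N+1}$ and one new edge, as follows. If $e=\{v_1\}$, the new edge is $\{v_1,v_{N+1}\}$. Otherwise write $e=\{v_{i_1},\dots,v_{i_n}\}$ with $1=i_1<\dots<i_n$, $n\ge2$; independently, with probability $1-r$ the new edge is $e\cup\{v_{N+1}\}$ and with probability $r$ it is $\{v_{i_1},\dots,v_{i_{n-1}},v_{N+1}\}$. $\mathcal{R}_k(N)$ denotes the number of edges of size $k$ at size $N$. *)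

theory Defs
  imports "HOL-Probability.Probability" "HOL-Library.Landau_Symbols"
begin

text \<open>A hypergraph of size N is represented by the list of its N edges (in order of
creation); each edge is the strictly increasing list of the indices of its vertices
(vertex v_i is represented by i).\<close>

type_synonym hgraph = "nat list list"

definition rrh_step :: "real \<Rightarrow> hgraph \<Rightarrow> hgraph pmf" where
  "rrh_step r H =
     bind_pmf (pmf_of_set {..<length H}) (\<lambda>i.
       (let e = H ! i; v = Suc (length H) in
        if e = [1] then return_pmf (H @ [[1, v]])
        else bind_pmf (bernoulli_pmf r) (\<lambda>redirect.
               return_pmf (H @ [if redirect then butlast e @ [v] else e @ [v]]))))"

text \<open>rrh_aux r n is the hypergraph of size n+1.\<close>
primrec rrh_aux :: "real \<Rightarrow> nat \<Rightarrow> hgraph pmf" where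
  "rrh_aux r 0 = return_pmf [[1]]"
| "rrh_aux r (Suc n) = bind_pmf (rrh_aux r n) (rrh_step r)"

text \<open>The RRH of size N (meaningful for N \<ge> 1).\<close>
definition rrh :: "real \<Rightarrow> nat \<Rightarrow> hgraph pmf" where
  "rrh r N = rrh_aux r (N - 1)"

definition num_edges :: "nat \<Rightarrow> hgraph \<Rightarrow> nat" where
  "num_edges k H = length (filter (\<lambda>e. length e = k) H)"

definition expected_R :: "real \<Rightarrow> nat \<Rightarrow> nat \<Rightarrow> real" where
  "expected_R r k N = measure_pmf.expectation (rrh r N) (\<lambda>H. real (num_edges k H))"

end

theory Submission
  imports Defs
begin

definition invH :: "hgraph \<Rightarrow> bool" where
  "invH H \<longleftrightarrow> length (filter (\<lambda>e. e = [1]) H) = 1 \<and> (\<forall>e\<in>set H. e = [1] \<or> 2 \<le> length e)"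

lemma step_support:
  assumes "invH H" "H \<noteq> []" "H' \<in> set_pmf (rrh_step r H)"
  shows "length H' = Suc (length H) \<and> invH H'"
proof -
  have fin: "finite {..<length H}" "{..<length H} \<noteq> {}" using assms(2) by auto
  from assms(3) obtain i where i: "i < length H" and
    H': "H' \<in> set_pmf (let e = H ! i; v = Suc (length H) in
        if e = [1] then return_pmf (H @ [[1, v]])
        else bind_pmf (bernoulli_pmf r) (\<lambda>redirect.
               return_pmf (H @ [if redirect then butlast e @ [v] else e @ [v]])))"
    unfolding rrh_step_def using fin by auto
  have eH: "H ! i \<in> set H" using i by simp
  show ?thesis
  proof (cases "H ! i = [1]")
    case True
    then show ?thesis using H' assms(1) unfolding invH_def by auto
  next
    case False
    then have l: "2 \<le> length (H ! i)" using eH assms(1) unfolding invH_def by auto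
    then obtain b where "H' = H @ [if b then butlast (H!i) @ [Suc (length H)] else (H!i) @ [Suc (length H)]]"
      using H' False by (auto simp: Let_def)
    moreover have "length (butlast (H!i) @ [Suc (length H)]) \<ge> 2" using l by simp
    moreover have "length ((H!i) @ [Suc (length H)]) \<ge> 2" using l by simp
    ultimately show ?thesis using assms(1) unfolding invH_def
      by (cases b) auto
  qed
qed

lemma step_finite:
  assumes "H \<noteq> []"
  shows "finite (set_pmf (rrh_step r H))"
proof -
  have fin: "finite {..<length H}" "{..<length H} \<noteq> {}" using assms by auto
  show ?thesis unfolding rrh_step_def using fin
    by (auto simp: Let_def)
qed

lemma aux_support:
  "H \<in> set_pmf (rrh_aux r n) \<Longrightarrow> length H = Suc n \<and> invH H"
proof (induction n arbitrary: H)
  case 0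
  then show ?case by (simp add: invH_def)
next
  case (Suc n)
  then obtain H0 where "H0 \<in> set_pmf (rrh_aux r n)" "H \<in> set_pmf (rrh_step r H0)" by auto
  moreover have "length H0 = Suc n" "invH H0" using Suc.IH calculation(1) by auto
  moreover have "H0 \<noteq> []" using calculation(3) by auto
  ultimately show ?case using step_support[of H0 H r] by simp
qed

lemma aux_finite: "finite (set_pmf (rrh_aux r n))"
proof (induction n)
  case 0
  then show ?case by simp
next
  case (Suc n)
  have "\<And>H. H \<in> set_pmf (rrh_aux r n) \<Longrightarrow> finite (set_pmf (rrh_step r H))"
    using aux_support step_finite by (metis length_0_conv nat.simps(3))
  then show ?case using Suc by auto
qed

lemma sum_nth_map: "(\<Sum>i<length xs. f (xs ! i)) = sum_list (map f xs)"
  by (simp add: sum_list_sum_nth lessThan_atLeast0)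

lemma sum_list_if: "sum_list (map (\<lambda>e. if P e then (c::real) else 0) xs) = c * length (filter P xs)"
  by (induction xs) (auto simp: algebra_simps)

definition inner :: "real \<Rightarrow> hgraph \<Rightarrow> nat \<Rightarrow> hgraph pmf" where
  "inner r H i = (let e = H ! i; v = Suc (length H) in
        if e = [1] then return_pmf (H @ [[1, v]])
        else bind_pmf (bernoulli_pmf r) (\<lambda>redirect.
               return_pmf (H @ [if redirect then butlast e @ [v] else e @ [v]])))"

lemma rrh_step_alt: "rrh_step r H = bind_pmf (pmf_of_set {..<length H}) (inner r H)"
  unfolding rrh_step_def inner_def by simp

lemma step_expect:
  assumes "invH H" "H \<noteq> []" "0 \<le> r" "r \<le> 1"
  shows "measure_pmf.expectation (rrh_step r H) (\<lambda>H. real (num_edges 2 H))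
     = real (num_edges 2 H) + (1 + r * real (num_edges 2 H)) / real (length H)"
proof -
  define g where "g i = real (num_edges 2 H) + (if H!i = [1] then 1 else if length (H!i) = 2 then r else 0)" for i
  have fin: "finite {..<length H}" "{..<length H} \<noteq> {}" using assms by auto
  have innerE: "measure_pmf.expectation (inner r H i) (\<lambda>H. real (num_edges 2 H)) = g i"
    if i: "i < length H" for i
  proof (cases "H ! i = [1]")
    case True
    then show ?thesis by (simp add: g_def num_edges_def inner_def)
  next
    case False
    then have l: "2 \<le> length (H ! i)" using i assms(1) unfolding invH_def by (auto dest: nth_mem)
    have "measure_pmf.expectation (bind_pmf (bernoulli_pmf r) (\<lambda>redirect.
               return_pmf (H @ [if redirect then butlast (H!i) @ [Suc (length H)] else (H!i) @ [Suc (length H)]]))) (\<lambda>H. real (num_edges 2 H))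
       = real (num_edges 2 (H @ [butlast (H!i) @ [Suc (length H)]])) * r + real (num_edges 2 (H @ [(H!i) @ [Suc (length H)]])) * (1 - r)"
      using assms(3,4) by (subst pmf_expectation_bind[of UNIV]) (auto simp: UNIV_bool)
    also have "\<dots> = g i" using l False by (auto simp: g_def num_edges_def algebra_simps)
    finally show ?thesis using False by (simp add: Let_def inner_def)
  qed
  have "measure_pmf.expectation (rrh_step r H) (\<lambda>H. real (num_edges 2 H)) = (\<Sum>i<length H. g i / real (length H))"
    unfolding rrh_step_alt using fin
  proof (subst pmf_expectation_bind_pmf_of_set)
    show "finite (set_pmf (inner r H i))" for i
      unfolding inner_def by (auto simp: Let_def)
  qed (auto simp: innerE divide_inverse mult.commute intro!: sum.cong)
  also have "\<dots> = (\<Sum>i<length H. g i) / real (length H)"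
    by (simp add: sum_divide_distrib)
  also have "(\<Sum>i<length H. g i) = (\<Sum>i<length H. real (num_edges 2 H) + ((\<lambda>e. if e = [1] then 1 else 0) (H!i) + (\<lambda>e. if length e = 2 then r else 0) (H!i)))"
    by (rule sum.cong) (auto simp: g_def)
  also have "\<dots> = real (length H) * real (num_edges 2 H) + 1 + r * real (num_edges 2 H)"
  proof -
    have a: "(\<Sum>i<length H. (\<lambda>e. if e = [1] then 1 else 0) (H!i)) = (1::real)"
      using assms(1) sum_nth_map[where xs=H and f="\<lambda>e. if e = [1] then (1::real) else 0"]
        sum_list_if[where P="\<lambda>e. e = [1]" and c=1 and xs=H] by (simp add: invH_def)
    have b: "(\<Sum>i<length H. (\<lambda>e. if length e = 2 then r else 0) (H!i)) = r * real (num_edges 2 H)"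
      using sum_nth_map[where xs=H and f="\<lambda>e. if length e = 2 then r else 0"]
        sum_list_if[where P="\<lambda>e. length e = 2" and c=r and xs=H] by (simp add: num_edges_def)
    show ?thesis using a b by (simp only: sum.distrib) simp
  qed
  finally show ?thesis using assms(2) by (simp add: field_simps)
qed

lemma aux_rec:
  assumes "0 \<le> r" "r \<le> 1"
  shows "measure_pmf.expectation (rrh_aux r (Suc n)) (\<lambda>H. real (num_edges 2 H))
    = measure_pmf.expectation (rrh_aux r n) (\<lambda>H. real (num_edges 2 H)) * (1 + r / real (Suc n)) + 1 / real (Suc n)"
proof -
  define p where "p = rrh_aux r n"
  define S where "S = set_pmf p"
  have finS: "finite S" unfolding S_def p_def by (rule aux_finite)
  have supp: "\<And>a. a \<in> S \<Longrightarrow> length a = Suc n \<and> invH a" unfolding S_def p_def by (rule aux_support)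
  have "measure_pmf.expectation (rrh_aux r (Suc n)) (\<lambda>H. real (num_edges 2 H))
     = (\<Sum>a\<in>S. pmf p a *\<^sub>R measure_pmf.expectation (rrh_step r a) (\<lambda>H. real (num_edges 2 H)))"
    unfolding p_def rrh_aux.simps
  proof (rule pmf_expectation_bind)
    show "finite S" by (rule finS)
    show "set_pmf (rrh_aux r n) \<subseteq> S" by (simp add: S_def p_def)
    fix x assume "x \<in> S"
    then have "x \<noteq> []" using supp[of x] by auto
    then show "finite (set_pmf (rrh_step r x))" by (rule step_finite)
  qed
  also have "\<dots> = (\<Sum>a\<in>S. pmf p a * real (num_edges 2 a) * (1 + r / real (Suc n)) + pmf p a * (1 / real (Suc n)))"
  proof (rule sum.cong[OF refl])
    fix a assume a: "a \<in> S"
    then have "a \<noteq> []" "invH a" "length a = Suc n" using supp[of a] by auto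
    then show "pmf p a *\<^sub>R measure_pmf.expectation (rrh_step r a) (\<lambda>H. real (num_edges 2 H)) =
      pmf p a * real (num_edges 2 a) * (1 + r / real (Suc n)) + pmf p a * (1 / real (Suc n))"
    proof -
      have e: "measure_pmf.expectation (rrh_step r a) (\<lambda>H. real (num_edges 2 H)) = real (num_edges 2 a) + (1 + r * real (num_edges 2 a)) / real (Suc n)"
        using step_expect[of a r] assms \<open>a \<noteq> []\<close> \<open>invH a\<close> \<open>length a = Suc n\<close> by simp
      show ?thesis unfolding e by (simp add: field_simps del: of_nat_Suc)
    qed
  qed
  also have "\<dots> = (\<Sum>a\<in>S. pmf p a * real (num_edges 2 a)) * (1 + r / real (Suc n)) + (\<Sum>a\<in>S. pmf p a) * (1 / real (Suc n))"
    by (simp add: sum.distrib sum_distrib_right sum_divide_distrib del: of_nat_Suc)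
  also have "(\<Sum>a\<in>S. pmf p a) = 1" using finS by (intro sum_pmf_eq_1) (auto simp: S_def)
  also have "(\<Sum>a\<in>S. pmf p a * real (num_edges 2 a)) = measure_pmf.expectation p (\<lambda>H. real (num_edges 2 H))"
    using finS by (subst integral_measure_pmf[of S]) (auto simp: S_def)
  finally show ?thesis by (simp add: p_def)
qed

lemma closed_form:
  assumes "0 < r" "r \<le> 1"
  shows "expected_R r 2 (Suc n) =
             (1 / r) * (Gamma (real (Suc n) + r) / (Gamma (1 + r) * Gamma (real (Suc n))) - 1)"
proof (induction n)
  case 0
  have "Gamma (1 + r) \<noteq> 0" using assms by (metis Gamma_real_pos add_pos_pos less_irrefl zero_less_one)
  then show ?case by (simp add: expected_R_def rrh_def num_edges_def)
next
  case (Suc n)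
  have nz: "\<And>x::real. x > 0 \<Longrightarrow> x \<notin> \<int>\<^sub>\<le>\<^sub>0" using nonpos_Ints_nonpos by fastforce
  have g1: "Gamma (real (Suc (Suc n)) + r) = (real (Suc n) + r) * Gamma (real (Suc n) + r)"
    using Gamma_plus1[OF nz[of "real (Suc n) + r"]] assms by (simp add: add_ac)
  have g2: "Gamma (real (Suc (Suc n))) = real (Suc n) * Gamma (real (Suc n))"
    using Gamma_plus1[OF nz[of "real (Suc n)"]] by (simp add: add_ac)
  have p1: "Gamma (1 + r) > 0" "Gamma (real (Suc n)) > 0" using assms by auto
  have "expected_R r 2 (Suc (Suc n)) = expected_R r 2 (Suc n) * (1 + r / real (Suc n)) + 1 / real (Suc n)"
    unfolding expected_R_def rrh_def using aux_rec[of r n] assms by simp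
  also have "\<dots> = (1 / r) * (Gamma (real (Suc (Suc n)) + r) / (Gamma (1 + r) * Gamma (real (Suc (Suc n)))) - 1)"
  proof -
    define A where "A = Gamma (real (Suc n) + r)"
    define B where "B = Gamma (real (Suc n))"
    define C where "C = Gamma (1 + r)"
    define m where "m = real (Suc n)"
    have m: "m > 0" by (simp add: m_def)
    have "expected_R r 2 (Suc n) * (1 + r / real (Suc n)) + 1 / real (Suc n)
       = (1 / r) * (A / (C * B) - 1) * (1 + r / m) + 1 / m"
      unfolding Suc A_def B_def C_def m_def ..
    also have "\<dots> = (1 / r) * ((m + r) * A / (C * (m * B)) - 1)"
      using p1 m assms unfolding B_def[symmetric] C_def[symmetric] by (simp add: field_simps)
    finally show ?thesis unfolding g1 g2 A_def B_def C_def m_def .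
  qed
  finally show ?case .
qed

lemma gamma_ratio:
  assumes "0 < r"
  shows "(\<lambda>N::nat. Gamma (real N + r) / (Gamma (real N) * real N powr r)) \<longlonglongrightarrow> 1"
proof -
  have nz: "\<And>x::real. x > 0 \<Longrightarrow> x \<notin> \<int>\<^sub>\<le>\<^sub>0" using nonpos_Ints_nonpos by fastforce
  have G0: "Gamma r \<noteq> 0" using assms by (simp add: Gamma_eq_zero_iff nz)
  have l: "(\<lambda>N. Gamma r / Gamma_series' r N) \<longlonglongrightarrow> Gamma r / Gamma r"
    by (intro tendsto_divide tendsto_const Gamma_series'_LIMSEQ G0)
  have ev: "eventually (\<lambda>N. Gamma r / Gamma_series' r N = Gamma (real N + r) / (Gamma (real N) * real N powr r)) sequentially"
    using eventually_gt_at_top[of 0]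
  proof eventually_elim
    case (elim N)
    have f: "fact (N - 1) = Gamma (real N)"
      using Gamma_fact[of "N - 1", where 'a=real] elim by (simp add: of_nat_diff)
    have p: "pochhammer r N = Gamma (r + real N) / Gamma r"
      using pochhammer_Gamma[OF nz[OF assms]] by simp
    have e: "exp (r * ln (real N)) = real N powr r" using elim by (simp add: powr_def)
    have pos: "Gamma (real N) > 0" "Gamma (r + real N) > 0" "real N powr r > 0" using elim assms by auto
    show ?case unfolding Gamma_series'_def f p e using pos G0 e by (simp add: field_simps add.commute)
  qed
  show ?thesis using l G0 tendsto_cong[OF ev] by simp
qed

lemma asymp_part:
  assumes "0 < r" "r < 1"
  shows "(\<lambda>N::nat. expected_R r 2 N) \<sim>[at_top] (\<lambda>N. real N powr r / (r * Gamma (1 + r)))"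
proof (rule asymp_equivI')
  define C where "C = Gamma (1 + r)"
  have C: "C > 0" using assms by (simp add: C_def)
  have l2: "(\<lambda>N::nat. real N powr (- r)) \<longlonglongrightarrow> 0"
    using assms by (intro tendsto_neg_powr filterlim_real_sequentially) auto
  have l: "(\<lambda>N::nat. Gamma (real N + r) / (Gamma (real N) * real N powr r) - C * real N powr (- r)) \<longlonglongrightarrow> 1 - C * 0"
    by (intro tendsto_diff tendsto_mult tendsto_const gamma_ratio l2 assms)
  have ev: "eventually (\<lambda>N. Gamma (real N + r) / (Gamma (real N) * real N powr r) - C * real N powr (- r)
        = expected_R r 2 N / (real N powr r / (r * Gamma (1 + r)))) at_top"
    using eventually_gt_at_top[of 0]
  proof eventually_elim
    case (elim N)
    then obtain n where n: "N = Suc n" by (cases N) auto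
    have pos: "Gamma (real N) > 0" "real N powr r > 0" using elim by auto
    show ?case unfolding n closed_form[OF assms(1) less_imp_le[OF assms(2)], of n]
      using pos C assms unfolding n C_def[symmetric] by (simp add: field_simps powr_minus_divide)
  qed
  show "((\<lambda>N. expected_R r 2 N / (real N powr r / (r * Gamma (1 + r)))) \<longlongrightarrow> 1) at_top"
    using l tendsto_cong[OF ev] by simp
qed

theorem mainTheorem15:
  fixes r :: real
  assumes "0 < r" and "r < 1"
  shows "(\<forall>N::nat. N \<ge> 1 \<longrightarrow>
           expected_R r 2 N =
             (1 / r) * (Gamma (real N + r) / (Gamma (1 + r) * Gamma (real N)) - 1))
       \<and> (\<lambda>N::nat. expected_R r 2 N) \<sim>[at_top] (\<lambda>N. real N powr r / (r * Gamma (1 + r)))"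
proof
  show "\<forall>N::nat. N \<ge> 1 \<longrightarrow>
           expected_R r 2 N =
             (1 / r) * (Gamma (real N + r) / (Gamma (1 + r) * Gamma (real N)) - 1)"
  proof (intro allI impI)
    fix N :: nat assume "N \<ge> 1"
    then obtain n where "N = Suc n" by (cases N) auto
    then show "expected_R r 2 N = (1 / r) * (Gamma (real N + r) / (Gamma (1 + r) * Gamma (real N)) - 1)"
      using closed_form[of r n] assms by simp
  qed
  show "(\<lambda>N::nat. expected_R r 2 N) \<sim>[at_top] (\<lambda>N. real N powr r / (r * Gamma (1 + r)))"
    by (rule asymp_part[OF assms])
qed

end
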